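(* Let $B$ be a commutative ring with identity and $A$ a subring of $B$ containing the identity. Then $A$ is a dense subring of $B$ if and only if the map $i^*:\operatorname{spec} B\to\operatorname{spec} A$, $i^*(P)=P\cap A$, is a topological embedding with dense image.
   Context: All rings are commutative with identity; subrings contain the identity. $\operatorname{spec} R$ denotes the set of prime ideals of $R$ with the Zariski topology. A subring $A$ of a ring $B$ is called a dense subring of $B$ if for every ideal $I$ of $B$ and every $b\in B$ with $b\notin \operatorname{rad}(I)$, there exists $a\in B$ with $a\notin \operatorname{rad}(I)$ such that $ab\in A$. *)

theory Defs
  imports "HOL-Analysis.Analysis" "HOL-Algebra.Algebra"
begin

definition Spec :: "('a, 'm) ring_scheme \<Rightarrow> 'a set set"
  where "Spec R = {P. primeideal P R}"

definition zariski_open :: "('a, 'm) ring_scheme \<Rightarrow> 'a set set \<Rightarrow> bool"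
  where "zariski_open R U \<longleftrightarrow> (\<exists>S \<subseteq> carrier R. U = Spec R - {P \<in> Spec R. S \<subseteq> P})"

lemma istopology_zariski: "istopology (zariski_open R)"
  unfolding istopology_def
proof (intro conjI allI impI)
  fix U V assume U: "zariski_open R U" and V: "zariski_open R V"
  then obtain S T where S: "S \<subseteq> carrier R" "U = Spec R - {P \<in> Spec R. S \<subseteq> P}"
    and T: "T \<subseteq> carrier R" "V = Spec R - {P \<in> Spec R. T \<subseteq> P}"
    by (auto simp: zariski_open_def)
  define W where "W = {s \<otimes>\<^bsub>R\<^esub> t | s t. s \<in> S \<and> t \<in> T \<and> s \<otimes>\<^bsub>R\<^esub> t \<in> carrier R}"
  have "U \<inter> V = Spec R - {P \<in> Spec R. W \<subseteq> P}"
  proof (intro equalityI subsetI)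
    fix P assume P: "P \<in> U \<inter> V"
    then have pi: "primeideal P R" by (auto simp: S T Spec_def)
    obtain s t where "s \<in> S" "s \<notin> P" "t \<in> T" "t \<notin> P" using P S T by auto
    then have "s \<otimes>\<^bsub>R\<^esub> t \<notin> P" using primeideal.I_prime[OF pi] S T by blast
    moreover have "s \<otimes>\<^bsub>R\<^esub> t \<in> carrier R"
    proof -
      interpret primeideal P R by (fact pi)
      show ?thesis using \<open>s \<in> S\<close> \<open>t \<in> T\<close> S(1) T(1) by (meson m_closed subsetD)
    qed
    ultimately show "P \<in> Spec R - {P \<in> Spec R. W \<subseteq> P}" using P \<open>s \<in> S\<close> \<open>t \<in> T\<close> S
      by (auto simp: W_def)
  next
    fix P assume P: "P \<in> Spec R - {P \<in> Spec R. W \<subseteq> P}"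
    then have pi: "primeideal P R" by (auto simp: Spec_def)
    then interpret primeideal P R .
    obtain s t where st: "s \<in> S" "t \<in> T" "s \<otimes>\<^bsub>R\<^esub> t \<notin> P" using P by (auto simp: W_def)
    have sc: "s \<in> carrier R" "t \<in> carrier R" using st S(1) T(1) by auto
    have "s \<notin> P" using st(3) sc I_r_closed by metis
    moreover have "t \<notin> P" using st(3) sc I_l_closed by metis
    ultimately show "P \<in> U \<inter> V" using P st unfolding S(2) T(2) by blast
  qed
  moreover have "W \<subseteq> carrier R" by (auto simp: W_def)
  ultimately show "zariski_open R (U \<inter> V)" unfolding zariski_open_def
    by (intro exI[of _ W] conjI) simp_all
next
  fix K assume K: "\<forall>U\<in>K. zariski_open R U"
  define Sf where "Sf U = (SOME S. S \<subseteq> carrier R \<and> U = Spec R - {P \<in> Spec R. S \<subseteq> P})" for U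
  have Sf: "Sf U \<subseteq> carrier R \<and> U = Spec R - {P \<in> Spec R. Sf U \<subseteq> P}" if "U \<in> K" for U
  proof -
    have "zariski_open R U" using K that by blast
    then show ?thesis unfolding Sf_def zariski_open_def by (rule someI_ex)
  qed
  have E: "\<Union>K = Spec R - {P \<in> Spec R. (\<Union>U\<in>K. Sf U) \<subseteq> P}"
  proof (intro equalityI subsetI)
    fix P assume "P \<in> \<Union>K"
    then obtain U where "U \<in> K" "P \<in> U" by auto
    then have "P \<in> Spec R" "\<not> Sf U \<subseteq> P" using Sf[of U] by auto
    then show "P \<in> Spec R - {P \<in> Spec R. (\<Union>U\<in>K. Sf U) \<subseteq> P}" using \<open>U \<in> K\<close> by auto
  next
    fix P assume "P \<in> Spec R - {P \<in> Spec R. (\<Union>U\<in>K. Sf U) \<subseteq> P}"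
    then obtain U where "U \<in> K" "\<not> Sf U \<subseteq> P" "P \<in> Spec R" by auto
    then have "P \<in> U" using Sf[of U] by auto
    then show "P \<in> \<Union>K" using \<open>U \<in> K\<close> by auto
  qed
  have C: "(\<Union>U\<in>K. Sf U) \<subseteq> carrier R" using Sf by auto
  show "zariski_open R (\<Union>K)" unfolding zariski_open_def
    by (rule exI[of _ "\<Union>U\<in>K. Sf U"], rule conjI[OF C E])
qed

definition Zariski :: "('a, 'm) ring_scheme \<Rightarrow> 'a set topology"
  where "Zariski R = topology (zariski_open R)"

lemma openin_Zariski: "openin (Zariski R) = zariski_open R"
  unfolding Zariski_def by (rule topology_inverse'[OF istopology_zariski])

definition rad :: "('a, 'm) ring_scheme \<Rightarrow> 'a set \<Rightarrow> 'a set"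
  where "rad R I = {x \<in> carrier R. \<exists>n::nat. x [^]\<^bsub>R\<^esub> n \<in> I}"

definition dense_subring :: "'a set \<Rightarrow> ('a, 'm) ring_scheme \<Rightarrow> bool"
  where "dense_subring A B \<longleftrightarrow>
    (\<forall>I b. ideal I B \<longrightarrow> b \<in> carrier B \<longrightarrow> b \<notin> rad B I \<longrightarrow>
       (\<exists>a \<in> carrier B. a \<notin> rad B I \<and> a \<otimes>\<^bsub>B\<^esub> b \<in> A))"

end

theory Submission
  imports Defs
begin

lemma (in cring) colon_ideal:
  assumes M: "ideal M R" and c: "c \<in> carrier R"
  shows "ideal {y \<in> carrier R. y \<otimes> c \<in> M} R"
proof -
  interpret ideal M R by (rule M)
  show ?thesis
  proof (rule idealI[OF ring_axioms])
    show "subgroup {y \<in> carrier R. y \<otimes> c \<in> M} (add_monoid R)"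
    proof (rule subgroup.intro)
      show "{y \<in> carrier R. y \<otimes> c \<in> M} \<subseteq> carrier (add_monoid R)" by auto
      fix x y assume x: "x \<in> {y \<in> carrier R. y \<otimes> c \<in> M}" and y: "y \<in> {y \<in> carrier R. y \<otimes> c \<in> M}"
      then show "x \<otimes>\<^bsub>add_monoid R\<^esub> y \<in> {y \<in> carrier R. y \<otimes> c \<in> M}"
        using c by (simp add: l_distr a_closed)
    next
      show "\<one>\<^bsub>add_monoid R\<^esub> \<in> {y \<in> carrier R. y \<otimes> c \<in> M}" using c by simp
    next
      fix x assume x: "x \<in> {y \<in> carrier R. y \<otimes> c \<in> M}"
      then show "inv\<^bsub>add_monoid R\<^esub> x \<in> {y \<in> carrier R. y \<otimes> c \<in> M}"
        using c by (simp add: a_inv_def[symmetric] l_minus a_inv_closed)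
    qed
  next
    fix a x assume "a \<in> {y \<in> carrier R. y \<otimes> c \<in> M}" "x \<in> carrier R"
    then show "x \<otimes> a \<in> {y \<in> carrier R. y \<otimes> c \<in> M}"
      using c by (simp add: m_assoc I_l_closed)
  next
    fix a x assume "a \<in> {y \<in> carrier R. y \<otimes> c \<in> M}" "x \<in> carrier R"
    then show "a \<otimes> x \<in> {y \<in> carrier R. y \<otimes> c \<in> M}"
      using c by (metis (no_types, lifting) mem_Collect_eq m_assoc m_comm m_closed I_l_closed)
  qed
qed

lemma (in ring) chain_union_ideal:
  assumes ne: "C \<noteq> {}" and id: "\<And>J. J \<in> C \<Longrightarrow> ideal J R"
    and ch: "\<And>J K. J \<in> C \<Longrightarrow> K \<in> C \<Longrightarrow> J \<subseteq> K \<or> K \<subseteq> J"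
  shows "ideal (\<Union>C) R"
proof (rule idealI[OF ring_axioms])
  show "subgroup (\<Union>C) (add_monoid R)"
  proof (rule subgroup.intro)
    show "\<Union>C \<subseteq> carrier (add_monoid R)"
    proof
      fix x assume "x \<in> \<Union>C"
      then obtain J where J: "J \<in> C" "x \<in> J" by blast
      interpret J: ideal J R by (rule id[OF J(1)])
      show "x \<in> carrier (add_monoid R)" using J(2) J.a_subset by auto
    qed
  next
    fix x y assume "x \<in> \<Union>C" "y \<in> \<Union>C"
    then obtain J1 J2 where J: "J1 \<in> C" "J2 \<in> C" "x \<in> J1" "y \<in> J2" by blast
    have "\<exists>J\<in>C. x \<in> J \<and> y \<in> J"
    proof (cases "J1 \<subseteq> J2")
      case True then show ?thesis using J by blast
    next
      case False
      then have "J2 \<subseteq> J1" using ch[OF J(1) J(2)] by blast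
      then show ?thesis using J by blast
    qed
    then obtain J where J: "J \<in> C" "x \<in> J" "y \<in> J" by blast
    interpret J: ideal J R by (rule id[OF J(1)])
    have "x \<oplus> y \<in> J" using J(2,3) by (rule J.a_closed)
    then show "x \<otimes>\<^bsub>add_monoid R\<^esub> y \<in> \<Union>C" using J(1) by auto
  next
    obtain J where J: "J \<in> C" using ne by blast
    interpret J: ideal J R by (rule id[OF J])
    have "\<zero> \<in> J" by (rule J.zero_closed)
    then have "\<zero> \<in> \<Union>C" using J by blast
    then show "\<one>\<^bsub>add_monoid R\<^esub> \<in> \<Union>C" by simp
  next
    fix x assume "x \<in> \<Union>C"
    then obtain J where J: "J \<in> C" "x \<in> J" by blast
    interpret J: ideal J R by (rule id[OF J(1)])
    have "\<ominus> x \<in> J" using J(2) by (rule J.a_inv_closed)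
    then show "inv\<^bsub>add_monoid R\<^esub> x \<in> \<Union>C" using J(1) by (auto simp: a_inv_def)
  qed
next
  fix a x assume "a \<in> \<Union>C" "x \<in> carrier R"
  then obtain J where J: "J \<in> C" "a \<in> J" by blast
  interpret J: ideal J R by (rule id[OF J(1)])
  have "x \<otimes> a \<in> J" using J(2) \<open>x \<in> carrier R\<close> by (rule J.I_l_closed)
  then show "x \<otimes> a \<in> \<Union>C" using J(1) by blast
next
  fix a x assume "a \<in> \<Union>C" "x \<in> carrier R"
  then obtain J where J: "J \<in> C" "a \<in> J" by blast
  interpret J: ideal J R by (rule id[OF J(1)])
  have "a \<otimes> x \<in> J" using J(2) \<open>x \<in> carrier R\<close> by (rule J.I_r_closed)
  then show "a \<otimes> x \<in> \<Union>C" using J(1) by blast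
qed

lemma (in cring) krull:
  assumes I: "ideal I R" and x: "x \<in> carrier R" and nx: "\<forall>n::nat. x [^] n \<notin> I"
  shows "\<exists>P. primeideal P R \<and> I \<subseteq> P \<and> x \<notin> P"
proof -
  define F where "F = {J. ideal J R \<and> I \<subseteq> J \<and> (\<forall>n::nat. x [^] n \<notin> J)}"
  have "\<exists>M\<in>F. \<forall>J\<in>F. M \<subseteq> J \<longrightarrow> J = M"
  proof (rule subset_Zorn_nonempty)
    show "F \<noteq> {}" using I nx unfolding F_def by blast
    fix C assume C: "C \<noteq> {}" "subset.chain F C"
    have sub: "C \<subseteq> F" and ch: "\<And>J K. J \<in> C \<Longrightarrow> K \<in> C \<Longrightarrow> J \<subseteq> K \<or> K \<subseteq> J"
      using C(2) by (auto simp: subset.chain_def)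
    have "ideal (\<Union>C) R"
      by (rule chain_union_ideal[OF C(1)]) (use sub ch in \<open>auto simp: F_def\<close>)
    moreover have "I \<subseteq> \<Union>C" using C(1) sub unfolding F_def by blast
    moreover have "\<forall>n::nat. x [^] n \<notin> \<Union>C" using sub unfolding F_def by blast
    ultimately show "\<Union>C \<in> F" unfolding F_def by blast
  qed
  then obtain M where MF: "M \<in> F" and Mmax: "\<And>J. J \<in> F \<Longrightarrow> M \<subseteq> J \<Longrightarrow> J = M" by blast
  have Mi: "ideal M R" and IM: "I \<subseteq> M" and xM: "\<And>n::nat. x [^] n \<notin> M" using MF unfolding F_def by auto
  interpret Mi: ideal M R by (rule Mi)
  have colon: "\<exists>n::nat. x [^] n \<otimes> c \<in> M"
    if c: "c \<in> carrier R" and a: "a \<in> carrier R" "a \<notin> M" "a \<otimes> c \<in> M" for a c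
  proof (rule ccontr)
    assume nn: "\<not> (\<exists>n::nat. x [^] n \<otimes> c \<in> M)"
    let ?J = "{y \<in> carrier R. y \<otimes> c \<in> M}"
    have MJ: "M \<subseteq> ?J" using c Mi.I_r_closed Mi.a_subset by blast
    have "?J \<in> F" unfolding F_def using colon_ideal[OF Mi c] MJ IM nn by blast
    then have "?J = M" using Mmax MJ by blast
    then show False using a by blast
  qed
  have one: "carrier R \<noteq> M"
  proof
    assume cM: "carrier R = M"
    have "x [^] (0::nat) \<in> M" unfolding nat_pow_0 cM[symmetric] by (rule one_closed)
    then show False using xM by blast
  qed
  have "primeideal M R"
  proof (rule primeidealI[OF Mi is_cring one])
    fix a b assume a: "a \<in> carrier R" and b: "b \<in> carrier R" and ab: "a \<otimes> b \<in> M"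
    show "a \<in> M \<or> b \<in> M"
    proof (rule ccontr)
      assume "\<not> (a \<in> M \<or> b \<in> M)"
      then have na: "a \<notin> M" and nb: "b \<notin> M" by auto
      obtain n :: nat where n: "x [^] n \<otimes> b \<in> M" using colon[OF b a na ab] by blast
      have bxn: "b \<otimes> x [^] n \<in> M" using n b x by (simp add: m_comm)
      have xn: "x [^] n \<in> carrier R" using x by simp
      obtain k :: nat where "x [^] k \<otimes> x [^] n \<in> M" using colon[OF xn b nb bxn] by blast
      then have "x [^] (k + n) \<in> M" using x by (simp add: nat_pow_mult)
      then show False using xM by blast
    qed
  qed
  moreover have "x \<notin> M" using xM[of 1] x by simp
  ultimately show ?thesis using IM by blast
qed

lemma prime_pow:
  fixes R (structure)
  assumes P: "primeideal P R" and x: "x \<in> carrier R" and xn: "x [^] (n::nat) \<in> P"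
  shows "x \<in> P"
proof -
  interpret primeideal P R by (rule P)
  show ?thesis using xn
  proof (induction n)
    case 0
    then have "\<one> \<in> P" by simp
    then show ?case using one_imp_carrier I_notcarr by blast
  next
    case (Suc n)
    then have "x [^] n \<otimes> x \<in> P" by simp
    then have "x [^] n \<in> P \<or> x \<in> P" using I_prime x nat_pow_closed by blast
    then show ?case using Suc.IH by blast
  qed
qed

lemma rad_prime:
  fixes R (structure)
  assumes P: "primeideal P R" shows "rad R P = P"
proof -
  interpret primeideal P R by (rule P)
  have "x \<in> rad R P" if "x \<in> P" for x
  proof -
    have xc: "x \<in> carrier R" using that a_subset by blast
    then have "x [^] (Suc 0) = x" by simp
    then show ?thesis using that xc unfolding rad_def by (metis (mono_tags, lifting) mem_Collect_eq)
  qed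
  moreover have "x \<in> P" if "x \<in> rad R P" for x
    using that prime_pow[OF P] unfolding rad_def by blast
  ultimately show ?thesis by blast
qed

lemma openin_Zariski_iff:
  "openin (Zariski R) U \<longleftrightarrow> (\<exists>S\<subseteq>carrier R. U = Spec R - {P \<in> Spec R. S \<subseteq> P})"
  by (simp add: openin_Zariski zariski_open_def)

lemma topspace_Zariski: "topspace (Zariski R) = Spec R"
proof
  show "topspace (Zariski R) \<subseteq> Spec R"
  proof
    fix P assume "P \<in> topspace (Zariski R)"
    then obtain U where U: "openin (Zariski R) U" "P \<in> U" unfolding topspace_def by blast
    from U(1) obtain S where "U = Spec R - {P \<in> Spec R. S \<subseteq> P}"
      unfolding openin_Zariski_iff by blast
    then show "P \<in> Spec R" using U(2) by simp
  qed
  have nc: "\<not> carrier R \<subseteq> P" if "P \<in> Spec R" for P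
  proof -
    interpret primeideal P R using that unfolding Spec_def by simp
    show ?thesis using I_notcarr a_subset by blast
  qed
  have eq: "Spec R = Spec R - {P \<in> Spec R. carrier R \<subseteq> P}"
  proof
    show "Spec R \<subseteq> Spec R - {P \<in> Spec R. carrier R \<subseteq> P}" using nc by blast
  qed blast
  have "openin (Zariski R) (Spec R)" unfolding openin_Zariski_iff
    by (rule exI[of _ "carrier R"]) (use eq in simp)
  then show "Spec R \<subseteq> topspace (Zariski R)" by (rule openin_subset)
qed

lemma krullB:
  assumes "cring B" "ideal I B" "x \<in> carrier B" "x \<notin> rad B I"
  shows "\<exists>P\<in>Spec B. I \<subseteq> P \<and> x \<notin> P"
  using cring.krull[OF assms(1-3)] assms(3,4) unfolding rad_def Spec_def by auto

lemma spec_restrict: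
  assumes B: "cring B" and A: "subring A B" and P: "P \<in> Spec B"
  shows "P \<inter> A \<in> Spec (B\<lparr>carrier := A\<rparr>)"
proof -
  interpret B: cring B by (rule B)
  have Asub: "A \<subseteq> carrier B" using subringE(1)[OF A] .
  have ringA: "ring (B\<lparr>carrier := A\<rparr>)" using B.subring_is_ring[OF A] .
  have cringA: "cring (B\<lparr>carrier := A\<rparr>)" using B.subcring_iff[OF Asub] B.subcringI'[OF A] by blast
  have idhom: "id \<in> ring_hom (B\<lparr>carrier := A\<rparr>) B"
    by (rule ring_hom_memI) (use Asub in auto)
  have hom: "ring_hom_ring (B\<lparr>carrier := A\<rparr>) B id"
    by (rule ring_hom_ringI2[OF ringA B.ring_axioms idhom])
  have "primeideal {r \<in> carrier (B\<lparr>carrier := A\<rparr>). id r \<in> P} (B\<lparr>carrier := A\<rparr>)"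
    using ring_hom_ring.primeideal_vimage[OF hom cringA] P unfolding Spec_def by blast
  moreover have "{r \<in> carrier (B\<lparr>carrier := A\<rparr>). id r \<in> P} = P \<inter> A" by auto
  ultimately show ?thesis unfolding Spec_def by simp
qed

lemma opY_iff:
  "openin (Zariski (B\<lparr>carrier := A\<rparr>)) U \<longleftrightarrow>
    (\<exists>S\<subseteq>A. U = Spec (B\<lparr>carrier := A\<rparr>) - {P \<in> Spec (B\<lparr>carrier := A\<rparr>). S \<subseteq> P})"
  using openin_Zariski_iff[of "B\<lparr>carrier := A\<rparr>" U] by simp

lemma dense_image:
  assumes B: "cring B" and A: "subring A B"
  shows "Zariski (B\<lparr>carrier := A\<rparr>) closure_of ((\<lambda>P. P \<inter> A) ` Spec B) = Spec (B\<lparr>carrier := A\<rparr>)"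
proof (rule antisym)
  interpret B: cring B by (rule B)
  have Asub: "A \<subseteq> carrier B" using subringE(1)[OF A] .
  show "Zariski (B\<lparr>carrier := A\<rparr>) closure_of ((\<lambda>P. P \<inter> A) ` Spec B) \<subseteq> Spec (B\<lparr>carrier := A\<rparr>)"
    using closure_of_subset_topspace topspace_Zariski by metis
  show "Spec (B\<lparr>carrier := A\<rparr>) \<subseteq> Zariski (B\<lparr>carrier := A\<rparr>) closure_of ((\<lambda>P. P \<inter> A) ` Spec B)"
  proof
    fix Q assume Q: "Q \<in> Spec (B\<lparr>carrier := A\<rparr>)"
    have QR: "primeideal Q (B\<lparr>carrier := A\<rparr>)" using Q unfolding Spec_def by simp
    show "Q \<in> Zariski (B\<lparr>carrier := A\<rparr>) closure_of ((\<lambda>P. P \<inter> A) ` Spec B)"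
      unfolding in_closure_of topspace_Zariski
    proof (intro conjI allI impI)
      show "Q \<in> Spec (B\<lparr>carrier := A\<rparr>)" by (rule Q)
      fix T assume T: "Q \<in> T \<and> openin (Zariski (B\<lparr>carrier := A\<rparr>)) T"
      then obtain S where S: "S \<subseteq> A" "T = Spec (B\<lparr>carrier := A\<rparr>) - {P \<in> Spec (B\<lparr>carrier := A\<rparr>). S \<subseteq> P}"
        unfolding opY_iff by blast
      then obtain s where s: "s \<in> S" "s \<notin> Q" using T by blast
      have sA: "s \<in> A" using s S by blast
      have "s \<notin> rad B {\<zero>\<^bsub>B\<^esub>}"
      proof
        assume "s \<in> rad B {\<zero>\<^bsub>B\<^esub>}"
        then obtain n :: nat where n: "s [^]\<^bsub>B\<^esub> n = \<zero>\<^bsub>B\<^esub>" unfolding rad_def by blast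
        have pw: "s [^]\<^bsub>B\<lparr>carrier := A\<rparr>\<^esub> n = s [^]\<^bsub>B\<^esub> n" by (simp add: nat_pow_def)
        have "\<zero>\<^bsub>B\<lparr>carrier := A\<rparr>\<^esub> \<in> Q"
          using QR by (meson additive_subgroup.zero_closed ideal.axioms(1) primeideal.axioms(1))
        then have "s [^]\<^bsub>B\<lparr>carrier := A\<rparr>\<^esub> n \<in> Q" using pw n by simp
        then have "s \<in> Q" using prime_pow[OF QR] sA by simp
        then show False using s by blast
      qed
      then obtain P where P: "P \<in> Spec B" "s \<notin> P"
        using krullB[OF B B.zeroideal] sA Asub by blast
      have "P \<inter> A \<in> T" using spec_restrict[OF B A P(1)] S s P by blast
      then show "\<exists>y. y \<in> (\<lambda>P. P \<inter> A) ` Spec B \<and> y \<in> T" using P by blast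
    qed
  qed
qed

lemma key_lemma:
  assumes B: "cring B" and D: "dense_subring A B" and Q: "Q \<in> Spec B" and T: "T \<subseteq> carrier B"
  shows "(\<exists>b\<in>T. b \<notin> Q) \<longleftrightarrow> \<not> {y \<in> A. \<exists>b\<in>T. \<exists>a\<in>carrier B. y = a \<otimes>\<^bsub>B\<^esub> b} \<subseteq> Q \<inter> A"
proof -
  have QB: "primeideal Q B" using Q unfolding Spec_def by simp
  interpret Q: primeideal Q B by (rule QB)
  show ?thesis
  proof
    assume "\<exists>b\<in>T. b \<notin> Q"
    then obtain b where b: "b \<in> T" "b \<notin> Q" by blast
    have bc: "b \<in> carrier B" using b(1) T by blast
    have "b \<notin> rad B Q" using b(2) rad_prime[OF QB] by simp
    then obtain a where a: "a \<in> carrier B" "a \<notin> rad B Q" "a \<otimes>\<^bsub>B\<^esub> b \<in> A"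
      using D Q.is_ideal bc unfolding dense_subring_def by blast
    have "a \<notin> Q" using a(2) rad_prime[OF QB] by simp
    then have "a \<otimes>\<^bsub>B\<^esub> b \<notin> Q" using Q.I_prime a(1) bc b(2) by blast
    then show "\<not> {y \<in> A. \<exists>b\<in>T. \<exists>a\<in>carrier B. y = a \<otimes>\<^bsub>B\<^esub> b} \<subseteq> Q \<inter> A"
      using a(1,3) b(1) by blast
  next
    assume "\<not> {y \<in> A. \<exists>b\<in>T. \<exists>a\<in>carrier B. y = a \<otimes>\<^bsub>B\<^esub> b} \<subseteq> Q \<inter> A"
    then obtain a b where ab: "b \<in> T" "a \<in> carrier B" "a \<otimes>\<^bsub>B\<^esub> b \<notin> Q" by blast
    have "b \<notin> Q"
    proof
      assume "b \<in> Q"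
      then have "a \<otimes>\<^bsub>B\<^esub> b \<in> Q" using ab(2) by (rule Q.I_l_closed)
      then show False using ab(3) by blast
    qed
    then show "\<exists>b\<in>T. b \<notin> Q" using ab(1) by blast
  qed
qed

lemma inj_lemma:
  assumes B: "cring B" and D: "dense_subring A B"
  shows "inj_on (\<lambda>P. P \<inter> A) (Spec B)"
proof -
  have sub: "P \<subseteq> Q" if P: "P \<in> Spec B" and Q: "Q \<in> Spec B" and eq: "P \<inter> A = Q \<inter> A" for P Q
  proof
    fix x assume x: "x \<in> P"
    interpret P: primeideal P B using P unfolding Spec_def by simp
    have xc: "x \<in> carrier B" using x P.a_subset by blast
    show "x \<in> Q"
    proof (rule ccontr)
      assume "x \<notin> Q"
      then have "\<exists>b\<in>{x}. b \<notin> Q" by blast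
      then have "\<not> {y \<in> A. \<exists>b\<in>{x}. \<exists>a\<in>carrier B. y = a \<otimes>\<^bsub>B\<^esub> b} \<subseteq> Q \<inter> A"
        using key_lemma[OF B D Q, of "{x}"] xc by blast
      then obtain y a where y: "y \<in> A" "y \<notin> Q" "a \<in> carrier B" "y = a \<otimes>\<^bsub>B\<^esub> x" by blast
      have "a \<otimes>\<^bsub>B\<^esub> x \<in> P" using x y(3) by (rule P.I_l_closed)
      then have "y \<in> P \<inter> A" using y by blast
      then show False using eq y(2) by blast
    qed
  qed
  show ?thesis
  proof (rule inj_onI)
    fix P Q assume "P \<in> Spec B" "Q \<in> Spec B" "P \<inter> A = Q \<inter> A"
    then show "P = Q" using sub by (metis subset_antisym)
  qed
qed

lemma fwd_lemma:
  assumes B: "cring B" and A: "subring A B" and D: "dense_subring A B"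
  shows "embedding_map (Zariski B) (Zariski (B\<lparr>carrier := A\<rparr>)) (\<lambda>P. P \<inter> A)"
proof -
  let ?R = "B\<lparr>carrier := A\<rparr>"
  let ?f = "\<lambda>P. P \<inter> A"
  let ?X = "Zariski B"
  let ?Y = "Zariski ?R"
  have Asub: "A \<subseteq> carrier B" using subringE(1)[OF A] .
  have specmap: "?f P \<in> Spec ?R" if "P \<in> Spec B" for P using spec_restrict[OF B A that] .
  have imsub: "?f ` Spec B \<subseteq> Spec ?R" using specmap by blast
  have cont: "continuous_map ?X ?Y ?f"
    unfolding continuous_map_def topspace_Zariski
  proof (intro conjI allI impI)
    show "?f \<in> Spec B \<rightarrow> Spec ?R" using specmap by blast
    fix U assume "openin ?Y U"
    then obtain S where S: "S \<subseteq> A" "U = Spec ?R - {P \<in> Spec ?R. S \<subseteq> P}" unfolding opY_iff by blast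
    have mem: "x \<in> {x \<in> Spec B. ?f x \<in> U} \<longleftrightarrow> x \<in> Spec B - {P \<in> Spec B. S \<subseteq> P}" for x
    proof -
      have "S \<subseteq> x \<inter> A \<longleftrightarrow> S \<subseteq> x" using S(1) by blast
      then show ?thesis using specmap[of x] unfolding S(2) by blast
    qed
    have "{x \<in> Spec B. ?f x \<in> U} = Spec B - {P \<in> Spec B. S \<subseteq> P}"
      using mem by blast
    moreover have "S \<subseteq> carrier B" using S(1) Asub by blast
    ultimately show "openin ?X {x \<in> Spec B. ?f x \<in> U}" unfolding openin_Zariski_iff by blast
  qed
  have "homeomorphic_map ?X (subtopology ?Y (?f ` topspace ?X)) ?f"
  proof (rule bijective_open_imp_homeomorphic_map)
    show "continuous_map ?X (subtopology ?Y (?f ` topspace ?X)) ?f"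
      unfolding continuous_map_in_subtopology using cont by blast
    show "?f ` topspace ?X = topspace (subtopology ?Y (?f ` topspace ?X))"
      unfolding topspace_subtopology topspace_Zariski using imsub by blast
    show "inj_on ?f (topspace ?X)" unfolding topspace_Zariski by (rule inj_lemma[OF B D])
    show "open_map ?X (subtopology ?Y (?f ` topspace ?X)) ?f"
      unfolding open_map_def
    proof (intro allI impI)
      fix W assume "openin ?X W"
      then obtain T where T: "T \<subseteq> carrier B" "W = Spec B - {P \<in> Spec B. T \<subseteq> P}"
        unfolding openin_Zariski_iff by blast
      define S where "S = {y \<in> A. \<exists>b\<in>T. \<exists>a\<in>carrier B. y = a \<otimes>\<^bsub>B\<^esub> b}"
      define U where "U = Spec ?R - {P \<in> Spec ?R. S \<subseteq> P}"
      have SA: "S \<subseteq> A" unfolding S_def by blast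
      have "openin ?Y U" unfolding opY_iff U_def using SA by blast
      moreover have "?f ` W = U \<inter> ?f ` topspace ?X"
      proof
        show "?f ` W \<subseteq> U \<inter> ?f ` topspace ?X"
        proof
          fix y assume "y \<in> ?f ` W"
          then obtain P where P: "P \<in> Spec B" "\<not> T \<subseteq> P" "y = ?f P" unfolding T(2) by blast
          have "\<exists>b\<in>T. b \<notin> P" using P(2) by blast
          then have "\<not> S \<subseteq> P \<inter> A" using key_lemma[OF B D P(1) T(1)] unfolding S_def by blast
          then have "y \<in> U" unfolding U_def using specmap[OF P(1)] P(3) by blast
          moreover have "y \<in> ?f ` topspace ?X" unfolding topspace_Zariski using P(1,3) by blast
          ultimately show "y \<in> U \<inter> ?f ` topspace ?X" by blast
        qed
        show "U \<inter> ?f ` topspace ?X \<subseteq> ?f ` W"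
        proof
          fix y assume y: "y \<in> U \<inter> ?f ` topspace ?X"
          then obtain P where P: "P \<in> Spec B" "y = ?f P" unfolding topspace_Zariski by blast
          have "\<not> S \<subseteq> P \<inter> A" using y P(2) unfolding U_def by blast
          then have "\<exists>b\<in>T. b \<notin> P" using key_lemma[OF B D P(1) T(1)] unfolding S_def by blast
          then have "P \<in> W" unfolding T(2) using P(1) by blast
          then show "y \<in> ?f ` W" using P(2) by blast
        qed
      qed
      ultimately show "openin (subtopology ?Y (?f ` topspace ?X)) (?f ` W)"
        unfolding openin_subtopology by blast
    qed
  qed
  then show ?thesis unfolding embedding_map_def .
qed

lemma bwd_lemma:
  assumes B: "cring B" and A: "subring A B"
    and E: "embedding_map (Zariski B) (Zariski (B\<lparr>carrier := A\<rparr>)) (\<lambda>P. P \<inter> A)"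
  shows "dense_subring A B"
proof -
  let ?R = "B\<lparr>carrier := A\<rparr>"
  let ?f = "\<lambda>P. P \<inter> A"
  let ?X = "Zariski B"
  let ?Y = "Zariski ?R"
  interpret B: cring B by (rule B)
  have Asub: "A \<subseteq> carrier B" using subringE(1)[OF A] .
  have hm: "homeomorphic_map ?X (subtopology ?Y (?f ` Spec B)) ?f"
    using E unfolding embedding_map_def topspace_Zariski .
  have inj: "inj_on ?f (Spec B)"
    using hm unfolding homeomorphic_eq_everything_map topspace_Zariski by blast
  have powin: "x [^]\<^bsub>B\<^esub> (n::nat) \<in> A" if "x \<in> A" for x n
  proof (induction n)
    case 0 then show ?case using subringE(3)[OF A] by simp
  next
    case (Suc n) then show ?case using subringE(6)[OF A] that by simp
  qed
  show ?thesis
    unfolding dense_subring_def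
  proof (intro allI impI)
    fix I b assume I: "ideal I B" and b: "b \<in> carrier B" and nb: "b \<notin> rad B I"
    obtain P where P: "P \<in> Spec B" "I \<subseteq> P" "b \<notin> P" using krullB[OF B I b nb] by blast
    have PB: "primeideal P B" using P(1) unfolding Spec_def by simp
    interpret P: primeideal P B by (rule PB)
    define W where "W = Spec B - {P \<in> Spec B. {b} \<subseteq> P}"
    have "openin ?X W" unfolding W_def openin_Zariski_iff using b by blast
    moreover have "W \<subseteq> topspace ?X" unfolding W_def topspace_Zariski by blast
    ultimately have "openin (subtopology ?Y (?f ` Spec B)) (?f ` W)"
      using homeomorphic_map_openness[OF hm] unfolding topspace_Zariski by blast
    then obtain U where U: "openin ?Y U" "?f ` W = U \<inter> ?f ` Spec B"
      unfolding openin_subtopology by blast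
    then obtain S where S: "S \<subseteq> A" "U = Spec ?R - {P \<in> Spec ?R. S \<subseteq> P}" unfolding opY_iff by blast
    have "P \<in> W" using P unfolding W_def by blast
    then have "?f P \<in> U" using U(2) by blast
    then have "\<not> S \<subseteq> P \<inter> A" unfolding S(2) by blast
    then obtain s where s: "s \<in> S" "s \<notin> P" using S(1) by blast
    have sA: "s \<in> A" using s S by blast
    have sc: "s \<in> carrier B" using sA Asub by blast
    have "s \<in> rad B (PIdl\<^bsub>B\<^esub> b)"
    proof (rule ccontr)
      assume "s \<notin> rad B (PIdl\<^bsub>B\<^esub> b)"
      then obtain Q where Q: "Q \<in> Spec B" "PIdl\<^bsub>B\<^esub> b \<subseteq> Q" "s \<notin> Q"
        using krullB[OF B B.cgenideal_ideal[OF b] sc] by blast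
      have bQ: "b \<in> Q" using Q(2) B.cgenideal_self[OF b] by blast
      have "s \<notin> Q \<inter> A" using Q(3) by blast
      then have "\<not> S \<subseteq> Q \<inter> A" using s(1) by blast
      then have "?f Q \<in> U" unfolding S(2) using spec_restrict[OF B A Q(1)] by blast
      then have "?f Q \<in> ?f ` W" using U(2) Q(1) by blast
      then obtain Q' where Q': "Q' \<in> W" "?f Q' = ?f Q" by blast
      have "Q' \<in> Spec B" using Q'(1) unfolding W_def by blast
      then have "Q' = Q" using inj_onD[OF inj Q'(2)] Q(1) by blast
      then show False using Q'(1) bQ unfolding W_def by blast
    qed
    then obtain n :: nat where "s [^]\<^bsub>B\<^esub> n \<in> PIdl\<^bsub>B\<^esub> b" unfolding rad_def by blast
    then obtain c where c: "c \<in> carrier B" "s [^]\<^bsub>B\<^esub> n = c \<otimes>\<^bsub>B\<^esub> b"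
      unfolding cgenideal_def by blast
    have "c \<notin> rad B I"
    proof
      assume "c \<in> rad B I"
      then obtain m :: nat where "c [^]\<^bsub>B\<^esub> m \<in> I" unfolding rad_def by blast
      then have "c [^]\<^bsub>B\<^esub> m \<in> P" using P(2) by blast
      then have "c \<in> P" using prime_pow[OF PB c(1)] by blast
      then have "c \<otimes>\<^bsub>B\<^esub> b \<in> P" using b by (rule P.I_r_closed)
      then have "s [^]\<^bsub>B\<^esub> n \<in> P" using c(2) by simp
      then have "s \<in> P" using prime_pow[OF PB sc] by blast
      then show False using s(2) by blast
    qed
    moreover have "c \<otimes>\<^bsub>B\<^esub> b \<in> A" using powin[OF sA, of n] c(2) by simp
    ultimately show "\<exists>a\<in>carrier B. a \<notin> rad B I \<and> a \<otimes>\<^bsub>B\<^esub> b \<in> A" using c(1) by blast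
  qed
qed

theorem corollary4p2:
  fixes B :: "('a, 'm) ring_scheme" and A :: "'a set"
  assumes "cring B" and "subring A B"
  shows "dense_subring A B \<longleftrightarrow>
    (embedding_map (Zariski B) (Zariski (B\<lparr>carrier := A\<rparr>)) (\<lambda>P. P \<inter> A) \<and>
     (Zariski (B\<lparr>carrier := A\<rparr>)) closure_of ((\<lambda>P. P \<inter> A) ` topspace (Zariski B))
       = topspace (Zariski (B\<lparr>carrier := A\<rparr>)))"
proof -
  have d: "(Zariski (B\<lparr>carrier := A\<rparr>)) closure_of ((\<lambda>P. P \<inter> A) ` topspace (Zariski B))
       = topspace (Zariski (B\<lparr>carrier := A\<rparr>))"
    unfolding topspace_Zariski by (rule dense_image[OF assms])
  show ?thesis using d fwd_lemma[OF assms] bwd_lemma[OF assms] by blast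
qed

end
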